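(* There exist constants $C>0$ and $N$ such that for all integers $n\ge N$ and all $g\ge1$, \[0< s(n,g)\le \frac{C}{n^2}.\] That is, $s(n,g)=O(1/n^2)$ as $n\to\infty$, uniformly in $g$.
   Context: Define $\lambda:[0,\infty)\to(0,1/4]$ by $\lambda(0)=1/4$ and, for $\theta>0$, $\lambda(\theta)$ is the unique $\lambda\in(0,1/4)$ with $-1+\frac{\operatorname{artanh}(\sqrt{1-4\lambda})}{\sqrt{1-4\lambda}}=\theta$. For $\theta>0$ set $f(\theta)=-\ln\lambda(\theta)-2\theta-\theta\ln(1-4\lambda(\theta))$ and $j(\theta)=-\tfrac12\ln(1-4(\theta+1)\lambda(\theta))+\tfrac12\ln 2$. For integers $n\ge1$, $g\ge1$ let \[\Omega(n,g)=\frac{\sqrt g\,g^g}{\sqrt{2\pi}\,e^g\,g!}\,n^{2g-2}\exp\!\Big(nf\big(\tfrac gn\big)+j\big(\tfrac gn\big)\Big),\qquad \Omega(n,0)=\frac{4^n n^{-3/2}}{\sqrt{2\pi}},\] and $s(n,g)=\Omega(n,g-1)/\Omega(n,g)$ for $n,g\ge1$. *)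

theory Defs
  imports "HOL-Analysis.Analysis"
begin

definition lam :: "real \<Rightarrow> real" where
  "lam \<theta> = (if \<theta> = 0 then 1/4 else
     (THE l. 0 < l \<and> l < 1/4 \<and>
        -1 + artanh (sqrt (1 - 4*l)) / sqrt (1 - 4*l) = \<theta>))"

definition fF :: "real \<Rightarrow> real" where
  "fF \<theta> = - ln (lam \<theta>) - 2*\<theta> - \<theta> * ln (1 - 4 * lam \<theta>)"

definition jF :: "real \<Rightarrow> real" where
  "jF \<theta> = - (1/2) * ln (1 - 4*(\<theta>+1) * lam \<theta>) + (1/2) * ln 2"

definition Omega :: "nat \<Rightarrow> nat \<Rightarrow> real" where
  "Omega n g = (if g = 0 then 4 ^ n * real n powr (-3/2) / sqrt (2*pi)
     else sqrt (real g) * real g ^ g / (sqrt (2*pi) * exp (real g) * fact g)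
          * real n ^ (2*g - 2)
          * exp (real n * fF (real g / real n) + jF (real g / real n)))"

definition sR :: "nat \<Rightarrow> nat \<Rightarrow> real" where
  "sR n g = Omega n (g - 1) / Omega n g"

end

theory Submission
  imports Defs
begin


lemma artanh_lb:
  fixes t :: real assumes "0 \<le> t" "t < 1"
  shows "t + t^3/3 \<le> artanh t"
proof -
  let ?f = "\<lambda>x::real. artanh x - x - x^3/3"
  have "?f 0 \<le> ?f t"
  proof (rule DERIV_nonneg_imp_increasing_open[OF assms(1)])
    fix x :: real assume x: "0 < x" "x < t"
    have "DERIV ?f x :> (1/(1-x^2) - 1 - 3*x^2/3)"
      using x assms by (auto intro!: derivative_eq_intros)
    moreover have "1/(1-x^2) - 1 - 3*x^2/3 \<ge> 0"
    proof -
      have "x^2 < 1" using x assms by (simp add: power_less_one_iff)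
      hence "1/(1-x^2) - 1 - 3*x^2/3 = x^4/(1-x^2)"
        by (simp add: field_simps power2_eq_square power4_eq_xxxx)
      thus ?thesis using \<open>x^2<1\<close> by simp
    qed
    ultimately show "\<exists>y. DERIV ?f x :> y \<and> y \<ge> 0" by blast
  next
    show "continuous_on {0..t} ?f" using assms by (intro continuous_intros) auto
  qed
  thus ?thesis by simp
qed



lemma artanh_ub1:
  fixes t :: real assumes "0 \<le> t" "t^2 \<le> 2/3"
  shows "artanh t \<le> t + t^3"
proof -
  have t1: "t < 1"
  proof (rule ccontr)
    assume "\<not> t < 1" hence "1 \<le> t^2" by (simp add: one_le_power)
    thus False using assms by simp
  qed
  let ?f = "\<lambda>x::real. x + x^3 - artanh x"
  have "?f 0 \<le> ?f t"
  proof (rule DERIV_nonneg_imp_increasing_open[OF assms(1)])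
    fix x :: real assume x: "0 < x" "x < t"
    have "DERIV ?f x :> (1 + 3*x^2 - 1/(1-x^2))"
      using x t1 by (auto intro!: derivative_eq_intros)
    moreover have "1 + 3*x^2 - 1/(1-x^2) \<ge> 0"
    proof -
      have "x^2 < t^2" using x by (simp add: power_strict_mono)
      hence x2: "x^2 < 2/3" using assms by simp
      hence "1 + 3*x^2 - 1/(1-x^2) = x^2*(2 - 3*x^2)/(1-x^2)"
        by (simp add: field_simps power2_eq_square)
      thus ?thesis using x2 by simp
    qed
    ultimately show "\<exists>y. DERIV ?f x :> y \<and> y \<ge> 0" by blast
  next
    show "continuous_on {0..t} ?f" using assms t1 by (intro continuous_intros) auto
  qed
  thus ?thesis by simp
qed


lemma deriv_ub2: "(x::real) > 0 \<Longrightarrow> x < 1 \<Longrightarrow> x^2 < 1 \<Longrightarrow> DERIV (\<lambda>x::real. (x - 2*x^3/3)/(1-x^2) - artanh x) x :> (((1 - 2*(3*x^2)/3)*(1-x^2) - (x - 2*x^3/3)*(-(2*x)))/(1-x^2)^2 - 1/(1-x^2))"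
  apply (rule derivative_eq_intros refl | simp)+
  apply (simp add: power2_eq_square)
  done

lemma artanh_ub2:
  fixes t :: real assumes "0 \<le> t" "t < 1"
  shows "artanh t \<le> (t - 2*t^3/3)/(1-t^2)"
proof -
  let ?f = "\<lambda>x::real. (x - 2*x^3/3)/(1-x^2) - artanh x"
  have "?f 0 \<le> ?f t"
  proof (rule DERIV_nonneg_imp_increasing_open[OF assms(1)])
    fix x :: real assume x: "0 < x" "x < t"
    have x2: "x^2 < 1" using x assms by (simp add: power_less_one_iff)
    have D: "DERIV ?f x :> (((1 - 2*(3*x^2)/3)*(1-x^2) - (x - 2*x^3/3)*(-(2*x)))/(1-x^2)^2 - 1/(1-x^2))"
      using deriv_ub2[of x] x assms x2 by simp
    have eq: "((1 - 2*(3*x^2)/3)*(1-x^2) - (x - 2*x^3/3)*(-(2*x)))/(1-x^2)^2 - 1/(1-x^2) = (2*x^4/3)/(1-x^2)^2"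
    proof -
      have d: "1 - x^2 \<noteq> 0" using x2 by simp
      have e1: "1/(1-x^2) = (1-x^2)/(1-x^2)^2" using d by (simp add: power2_eq_square)
      have e2: "((1 - 2*(3*x^2)/3)*(1-x^2) - (x - 2*x^3/3)*(-(2*x))) - (1-x^2) = 2*x^4/3"
        by (simp add: algebra_simps power2_eq_square power3_eq_cube power4_eq_xxxx)
      show ?thesis unfolding e1 diff_divide_distrib[symmetric] e2 ..

    qed
    have nn: "(2*x^4/3)/(1-x^2)^2 \<ge> 0" by (intro divide_nonneg_nonneg) auto
    from D[unfolded eq] nn show "\<exists>y. DERIV ?f x :> y \<and> y \<ge> 0" by blast
  next
    have "\<forall>x\<in>{0..t}. x^2 < 1" using assms by (auto simp: abs_square_less_1)
    hence "\<forall>x\<in>{0..t}. 1 - x^2 \<noteq> 0" by auto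
    thus "continuous_on {0..t} ?f" using assms by (intro continuous_intros) auto
  qed
  moreover have "(0 - 2 * 0 ^ 3 / 3) / (1 - 0^2) - artanh (0::real) = 0" by simp
  ultimately show ?thesis by linarith
qed





definition Bf :: "real \<Rightarrow> real" where "Bf t = artanh t / t - 1"
definition hh :: "real \<Rightarrow> real" where "hh t = 1 - (Bf t + 1) * (1 - t^2)"

lemma Bf_lb: assumes "0 < t" "t < 1" shows "t^2/3 \<le> Bf t"
proof -
  have "t + t^3/3 \<le> artanh t" using artanh_lb assms by auto
  hence "(t + t^3/3)/t \<le> artanh t / t" using assms by (intro divide_right_mono) auto
  moreover have "(t + t^3/3)/t = 1 + t^2/3" using assms
    by (simp add: field_simps power2_eq_square power3_eq_cube)
  ultimately show ?thesis unfolding Bf_def by linarith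
qed

lemma Bf_ub: assumes "0 < t" "t \<le> 1/2" shows "Bf t \<le> t^2"
proof -
  have "t^2 \<le> (1/2)^2" using assms by (intro power_mono) auto
  hence "t^2 \<le> 2/3" by (simp add: power2_eq_square)
  hence "artanh t \<le> t + t^3" using artanh_ub1 assms by auto
  hence "artanh t / t \<le> (t + t^3)/t" using assms by (intro divide_right_mono) auto
  moreover have "(t + t^3)/t = 1 + t^2" using assms
    by (simp add: field_simps power2_eq_square power3_eq_cube)
  ultimately show ?thesis unfolding Bf_def by linarith
qed

lemma hh_lb: assumes "0 < t" "t < 1" shows "2*t^2/3 \<le> hh t"
proof -
  have t2: "t^2 < 1" using assms by (simp add: abs_square_less_1)
  have "artanh t \<le> (t - 2*t^3/3)/(1-t^2)" using artanh_ub2 assms by auto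
  hence "artanh t * (1-t^2) \<le> t - 2*t^3/3" using t2 by (simp add: pos_le_divide_eq)
  hence "artanh t * (1-t^2) / t \<le> (t - 2*t^3/3)/t" using assms by (intro divide_right_mono) auto
  moreover have "(t - 2*t^3/3)/t = 1 - 2*t^2/3" using assms
    by (simp add: field_simps power2_eq_square power3_eq_cube)
  moreover have "(Bf t + 1) * (1 - t^2) = artanh t * (1-t^2) / t" unfolding Bf_def by simp
  ultimately show ?thesis unfolding hh_def by linarith
qed

lemma hh_le1: assumes "0 < t" "t < 1" shows "hh t \<le> 1"
proof -
  have t2: "t^2 < 1" using assms by (simp add: abs_square_less_1)
  have "0 \<le> artanh t" using artanh_lb[of t] assms by (smt (verit) zero_le_power divide_nonneg_nonneg)
  hence "0 \<le> (Bf t + 1)" unfolding Bf_def using assms by simp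
  hence "0 \<le> (Bf t + 1) * (1 - t^2)" using t2 by simp
  thus ?thesis unfolding hh_def by linarith
qed

lemma Bf_deriv_raw: "0 < t \<Longrightarrow> t < 1 \<Longrightarrow> t^2 < 1 \<Longrightarrow>
  DERIV Bf t :> ((1/(1-t^2)) * t - artanh t * 1) / (t * t)"
  unfolding Bf_def[abs_def]
  apply (rule derivative_eq_intros refl | simp)+
  done

lemma Bf_deriv: assumes "0 < t" "t < 1" shows "DERIV Bf t :> hh t / (t * (1 - t^2))"
proof -
  have t2: "t^2 < 1" using assms by (simp add: abs_square_less_1)
  have d: "1 - t^2 \<noteq> 0" using t2 by simp
  have "((1/(1-t^2)) * t - artanh t * 1) / (t * t) = hh t / (t * (1 - t^2))"
    unfolding hh_def Bf_def using assms d by (simp add: field_simps)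
  thus ?thesis using Bf_deriv_raw[OF assms t2] by simp
qed

lemma Bf_deriv_pos: assumes "0 < t" "t < 1" shows "hh t / (t * (1 - t^2)) > 0"
proof -
  have t2: "t^2 < 1" using assms by (simp add: abs_square_less_1)
  have "0 < t^2" using assms by simp
  hence "hh t > 0" using hh_lb[OF assms] by linarith
  thus ?thesis using t2 assms by (intro divide_pos_pos mult_pos_pos) auto
qed

lemma Bf_strict_mono: assumes "0 < a" "a < b" "b < 1" shows "Bf a < Bf b"
proof (rule DERIV_pos_imp_increasing[OF assms(2)])
  fix x assume "a \<le> x" "x \<le> b"
  hence x: "0 < x" "x < 1" using assms by auto
  show "\<exists>y. DERIV Bf x :> y \<and> 0 < y" using Bf_deriv[OF x] Bf_deriv_pos[OF x] by blast
qed

lemma Bf_mono_iff: assumes "0 < a" "a < 1" "0 < b" "b < 1" shows "Bf a \<le> Bf b \<longleftrightarrow> a \<le> b"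
  using Bf_strict_mono[of a b] Bf_strict_mono[of b a] assms by smt

lemma Bf_cont: assumes "0 < a" "b < 1" shows "continuous_on {a..b} Bf"
proof (cases "a \<le> b")
  case True
  show ?thesis
  proof (rule DERIV_atLeastAtMost_imp_continuous_on)
    fix x assume "a \<le> x" "x \<le> b"
    hence x: "0 < x" "x < 1" using assms by auto
    show "\<exists>y. DERIV Bf x :> y" using Bf_deriv[OF x] by blast
  qed
next
  case False thus ?thesis by simp
qed




lemma Bf_exists: assumes th: "0 < (\<theta>::real)" shows "\<exists>u. 0 < u \<and> u < 1 \<and> Bf u = \<theta>"
proof -
  define a where "a = min (1/2) (sqrt \<theta> / 2)"
  have a0: "0 < a" "a \<le> 1/2" using th by (auto simp: a_def)
  have "Bf a \<le> a^2" using Bf_ub a0 by auto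
  also have "a^2 \<le> (sqrt \<theta> / 2)^2" using a0 by (intro power_mono) (auto simp: a_def)
  also have "(sqrt \<theta> / 2)^2 = \<theta>/4" using th by (simp add: power_divide)
  finally have Ba: "Bf a \<le> \<theta>" using th by linarith
  define E where "E = exp (2*\<theta>+2)"
  define b where "b = 1 - 1/E"
  have "1 + (2*\<theta>+2) \<le> E" unfolding E_def by (rule exp_ge_add_one_self)
  hence E2: "E > 2" using th by linarith
  hence b: "1/2 < b" "b < 1" unfolding b_def by (auto simp: field_simps)
  have "(1+b)/(1-b) \<ge> 1/(1-b)" using b by (intro divide_right_mono) auto
  moreover have "1/(1-b) = E" unfolding b_def by simp
  ultimately have "ln ((1+b)/(1-b)) \<ge> ln E" using E2 by (subst ln_le_cancel_iff) auto
  hence "ln ((1+b)/(1-b)) \<ge> 2*\<theta>+2" unfolding E_def by simp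
  hence at: "artanh b \<ge> \<theta> + 1" unfolding artanh_def by simp
  have "artanh b \<le> artanh b / b" using b at th by (simp add: le_divide_eq)
  hence Bb: "\<theta> \<le> Bf b" using at unfolding Bf_def by linarith
  have "\<exists>x. a \<le> x \<and> x \<le> b \<and> Bf x = \<theta>"
    by (rule IVT'[of Bf a \<theta> b, OF Ba Bb]) (use a0 b in \<open>auto intro!: Bf_cont\<close>)
  then obtain x where "a \<le> x" "x \<le> b" "Bf x = \<theta>" by blast
  thus ?thesis using a0 b by (intro exI[of _ x]) auto
qed

lemma lam_eq: assumes th: "0 < \<theta>" and u: "0 < u" "u < 1" "Bf u = \<theta>"
  shows "lam \<theta> = (1 - u^2)/4"
proof -
  have u2: "u^2 < 1" "0 < u^2" using u by (auto simp: abs_square_less_1)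
  let ?P = "\<lambda>l. 0 < l \<and> l < 1/4 \<and> -1 + artanh (sqrt (1 - 4*l)) / sqrt (1 - 4*l) = \<theta>"
  have "(THE l. ?P l) = (1 - u^2)/4"
  proof (rule the_equality)
    have "1 - 4*((1-u^2)/4) = u^2" by (simp add: field_simps)
    hence "sqrt (1 - 4*((1-u^2)/4)) = u" using u by simp
    thus "?P ((1 - u^2)/4)" using u u2 unfolding Bf_def by auto
  next
    fix l assume P: "?P l"
    define s where "s = sqrt (1 - 4*l)"
    have s: "0 < s" "s < 1" using P unfolding s_def by (auto simp: real_sqrt_less_iff)
    have "Bf s = \<theta>" using P unfolding Bf_def s_def by simp
    hence "s = u" using Bf_mono_iff[of s u] Bf_mono_iff[of u s] s u by auto
    hence "1 - 4*l = u^2" unfolding s_def using P by (metis real_sqrt_pow2 less_imp_le diff_ge_0_iff_ge mult.commute P less_divide_eq_numeral1(1) mult_le_cancel_left_pos zero_less_numeral)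
    thus "l = (1 - u^2)/4" by simp
  qed
  thus ?thesis unfolding lam_def using th by simp
qed




definition FF :: "real \<Rightarrow> real" where
  "FF t = - ln ((1 - t^2)/4) - 2 * Bf t - Bf t * ln (t^2)"

lemma lin_aux: "X - 2*b - Z = 0 \<Longrightarrow> X - 2*b - (b*L + Z) + c*b = (c - L)*(b::real)"
  by (simp add: algebra_simps)

lemma br1: fixes t d B :: real assumes "t \<noteq> 0" "d \<noteq> 0"
  shows "2*t/d - 2*((1 - (B+1)*d)/(t*d)) - 2*B/t = (2*t*t - 2 + 2*d)/(t*d)"
  using assms by (simp add: field_simps)

lemma bracket_alg: fixes t :: real assumes "0 < t" "t^2 < 1"
  shows "2*t/(1-t^2) - 2*((1 - (B + 1) * (1 - t^2))/(t*(1-t^2))) - 2*B/t = 0"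
proof -
  have d: "1 - t^2 \<noteq> 0" "t \<noteq> 0" using assms by linarith+
  have "2*t*t - 2 + 2*(1-t^2) = 0" by (simp add: power2_eq_square)
  thus ?thesis using br1[OF d(2) d(1), of B] by simp
qed

lemma e1: "4 * t / (2 - t^2 * 2) = 2 * t / (1 - (t::real)^2)"
proof -
  have "2 - t^2*2 = 2*(1-t^2)" by simp
  hence "4 * t / (2 - t^2 * 2) = (2*(2*t)) / (2*(1-t^2))" by simp
  also have "\<dots> = 2 * t / (1 - t^2)" by (rule mult_divide_mult_cancel_left) simp
  finally show ?thesis .
qed

lemma D1: "0 < (t::real) \<Longrightarrow> t^2 < 1 \<Longrightarrow> DERIV (\<lambda>t. - ln ((1 - t^2)/4)) t :> 2*t/(1-t^2)"
  apply (rule derivative_eq_intros refl | simp)+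
  apply (rule e1)
  done

lemma D3: "0 < (t::real) \<Longrightarrow> DERIV (\<lambda>t. ln (t^2)) t :> 2/t"
  apply (rule derivative_eq_intros refl | simp)+
  apply (simp add: power2_eq_square)
  done

lemma FF_ineq: assumes "0 < v" "v \<le> u" "u < 1"
  shows "- ln (u^2) * (Bf u - Bf v) \<le> FF u - FF v"
proof -
  define c where "c = ln (u^2)"
  let ?G = "\<lambda>t. - ln ((1 - t^2)/4) - 2 * Bf t - Bf t * ln (t^2) + c * Bf t"
  have der: "DERIV ?G t :> (c - ln (t^2)) * (hh t / (t * (1 - t^2)))" if t: "0 < t" "t < 1" for t
  proof -
    have t2: "t^2 < 1" using t by (simp add: abs_square_less_1)
    note B = Bf_deriv[OF t]
    have DD: "DERIV ?G t :> (2*t/(1-t^2) - 2 * (hh t / (t * (1 - t^2)))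
          - ((hh t / (t * (1 - t^2))) * ln (t^2) + 2/t * Bf t) + c * (hh t / (t * (1 - t^2))))"
      by (intro DERIV_add DERIV_diff DERIV_mult DERIV_cmult D1 B D3 t t2)
    have Z: "2*t/(1-t^2) - 2 * (hh t / (t * (1 - t^2))) - 2/t * Bf t = 0"
      using bracket_alg[OF t(1) t2, of "Bf t"] unfolding hh_def by simp
    have eq: "2*t/(1-t^2) - 2 * (hh t / (t * (1 - t^2)))
          - ((hh t / (t * (1 - t^2))) * ln (t^2) + 2/t * Bf t) + c * (hh t / (t * (1 - t^2)))
          = (c - ln (t^2)) * (hh t / (t * (1 - t^2)))"
      by (rule lin_aux[OF Z])
    show ?thesis using DD unfolding eq .
  qed
  have "?G v \<le> ?G u"
  proof (rule DERIV_nonneg_imp_increasing_open[OF assms(2)])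
    fix x assume x: "v < x" "x < u"
    hence x': "0 < x" "x < 1" using assms by auto
    have "x^2 \<le> u^2" using x x' by (intro power_mono) auto
    hence "ln (x^2) \<le> c" unfolding c_def using x' by (subst ln_le_cancel_iff) auto
    hence "0 \<le> (c - ln (x^2)) * (hh x / (x * (1 - x^2)))"
      using Bf_deriv_pos[OF x'] by (intro mult_nonneg_nonneg) auto
    thus "\<exists>y. DERIV ?G x :> y \<and> 0 \<le> y" using der[OF x'] by blast
  next
    show "continuous_on {v..u} ?G"
    proof (rule DERIV_atLeastAtMost_imp_continuous_on)
      fix x assume "v \<le> x" "x \<le> u"
      hence x': "0 < x" "x < 1" using assms by auto
      show "\<exists>y. DERIV ?G x :> y" using der[OF x'] by blast
    qed
  qed
  thus ?thesis unfolding FF_def c_def by (simp add: algebra_simps)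
qed




lemma fF_eq: assumes "0 < \<theta>" "0 < u" "u < 1" "Bf u = \<theta>" shows "fF \<theta> = FF u"
proof -
  have l: "lam \<theta> = (1 - u^2)/4" by (rule lam_eq[OF assms])
  have "1 - 4 * lam \<theta> = u^2" unfolding l by (simp add: field_simps)
  hence "fF \<theta> = - ln ((1 - u^2)/4) - 2*\<theta> - \<theta> * ln (u^2)" unfolding fF_def by (simp only: l)
  thus ?thesis unfolding FF_def using assms(4) by simp
qed

lemma jF_eq: assumes "0 < \<theta>" "0 < u" "u < 1" "Bf u = \<theta>"
  shows "jF \<theta> = - (1/2) * ln (hh u) + (1/2) * ln 2"
proof -
  have l: "lam \<theta> = (1 - u^2)/4" by (rule lam_eq[OF assms])
  have "4*(\<theta>+1) * lam \<theta> = (Bf u + 1) * (1 - u^2)" unfolding l using assms(4) by simp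
  thus ?thesis unfolding jF_def hh_def by simp
qed

definition PP :: "nat \<Rightarrow> real" where
  "PP g = sqrt (real g) * real g ^ g / (sqrt (2*pi) * exp (real g) * fact g)"

lemma PP_pos: "g \<ge> 1 \<Longrightarrow> PP g > 0"
  unfolding PP_def by (intro divide_pos_pos mult_pos_pos) auto

lemma PP_step: "PP m \<le> exp 1 * PP (Suc m)"
proof -
  define K where "K = 1 / (sqrt (2*pi) * exp (real m) * fact m)"
  have K: "K > 0" unfolding K_def by (intro divide_pos_pos mult_pos_pos) auto
  have a: "PP m = K * (sqrt (real m) * real m ^ m)" unfolding PP_def K_def by simp
  have "exp (real (Suc m)) = exp (real m) * exp 1" by (simp add: exp_add[symmetric])
  moreover have "(fact (Suc m) :: real) = real (Suc m) * fact m" by simp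
  moreover have "real (Suc m) ^ Suc m = real (Suc m) * real (Suc m) ^ m" by simp
  ultimately have b: "exp 1 * PP (Suc m) = K * (sqrt (real (Suc m)) * real (Suc m) ^ m)"
    unfolding PP_def K_def by (simp add: field_simps del: of_nat_Suc)
  have "sqrt (real m) * real m ^ m \<le> sqrt (real (Suc m)) * real (Suc m) ^ m"
    by (intro mult_mono power_mono) auto
  thus ?thesis unfolding a b using K by simp
qed

lemma Omega_pos_eq: assumes "g \<ge> 1"
  shows "Omega n g = PP g * real n ^ (2*g - 2) * exp (real n * fF (real g / real n) + jF (real g / real n))"
  using assms unfolding Omega_def PP_def by simp




lemma Omega_pos: assumes "n \<ge> 1" shows "Omega n g > 0"
proof (cases "g = 0")
  case True thus ?thesis using assms unfolding Omega_def by (auto intro!: divide_pos_pos mult_pos_pos)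
next
  case False
  hence "g \<ge> 1" by simp
  thus ?thesis using Omega_pos_eq[of g n] PP_pos[of g] assms by (auto intro!: mult_pos_pos)
qed

lemma u_sq_bound: assumes "0 < u'" "u' \<le> u" "u < 1" "Bf u \<le> 2 * Bf u'"
  shows "u^2 \<le> 6 * u'^2"
proof (cases "u' \<ge> 1/2")
  case True
  have "u^2 \<le> 1" using assms by (simp add: power_le_one)
  moreover have "(1/2)^2 \<le> u'^2" using True by (intro power_mono) auto
  ultimately show ?thesis by (simp add: power2_eq_square)
next
  case False
  have "Bf u' \<le> u'^2" using Bf_ub[of u'] False assms by auto
  moreover have "u^2/3 \<le> Bf u" using Bf_lb[of u] assms by auto
  ultimately show ?thesis using assms(4) by linarith
qed

lemma case_ge2: assumes n: "n \<ge> 1" and m: "m \<ge> 1"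
  shows "Omega n m \<le> (12 * exp 1) * Omega n (Suc m) / (real n)^2"
proof -
  define th where "th = real (Suc m) / real n"
  define th' where "th' = real m / real n"
  have n0: "real n > 0" using n by simp
  have th0: "th > 0" "th' > 0" unfolding th_def th'_def using n m by auto
  have dth: "th - th' = 1 / real n" unfolding th_def th'_def by (simp add: diff_divide_distrib[symmetric])
  have th2: "th \<le> 2 * th'" unfolding th_def th'_def using m n0 by (simp add: divide_right_mono)
  obtain u where u: "0 < u" "u < 1" "Bf u = th" using Bf_exists[OF th0(1)] by blast
  obtain u' where u': "0 < u'" "u' < 1" "Bf u' = th'" using Bf_exists[OF th0(2)] by blast
  have "th' < th" unfolding th_def th'_def using n0 by (intro divide_strict_right_mono) auto
  have uu: "u' \<le> u"
  proof (rule ccontr)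
    assume "\<not> u' \<le> u"
    hence "Bf u < Bf u'" using Bf_strict_mono[of u u'] u u' by auto
    thus False using \<open>th' < th\<close> u u' by simp
  qed
  have Fi: "- ln (u^2) * (th - th') \<le> FF u - FF u'"
    using FF_ineq[OF u'(1) uu u(2)] u u' by simp
  hence "real n * (- ln (u^2) * (th - th')) \<le> real n * (FF u - FF u')"
    using n0 by (intro mult_left_mono) auto
  moreover have "real n * (- ln (u^2) * (th - th')) = - ln (u^2)" unfolding dth using n0 by simp
  ultimately have Fn: "- ln (u^2) \<le> real n * FF u - real n * FF u'" by (simp add: algebra_simps)
  have fe: "fF th = FF u" "fF th' = FF u'" using fF_eq th0 u u' by auto
  have je: "jF th = - (1/2) * ln (hh u) + (1/2) * ln 2" "jF th' = - (1/2) * ln (hh u') + (1/2) * ln 2"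
    using jF_eq th0 u u' by auto
  have "0 < u^2" using u by simp
  hence hu: "0 < hh u" "hh u \<le> 1" using hh_lb[of u] hh_le1[of u] u by linarith+
  hence lhu: "ln (hh u) \<le> 0" by simp
  have "0 < u'^2" using u' by simp
  hence hl: "u'^2/4 \<le> hh u'" "0 < u'^2/4" using hh_lb[of u'] u' by linarith+
  hence "ln (u'^2/4) \<le> ln (hh u')" by (intro ln_mono) auto
  moreover have "ln (u'^2/4) = 2 * ln u' - 2 * ln 2"
    using u' ln_realpow[of 2 2] by (simp add: ln_div ln_realpow)
  ultimately have lhu': "2 * ln u' - 2 * ln 2 \<le> ln (hh u')" by simp
  have "u^2 \<le> 6 * u'^2" using u_sq_bound[OF u'(1) uu u(2)] u u' th2 by simp
  hence "ln (u^2) \<le> ln (6 * u'^2)" using u u' by (intro ln_mono) auto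
  moreover have "ln (6 * u'^2) = ln 6 + 2 * ln u'" using u' by (simp add: ln_mult ln_realpow)
  moreover have "ln (u^2) = 2 * ln u" using u by (simp add: ln_realpow)
  ultimately have l6: "2 * ln u \<le> ln 6 + 2 * ln u'" by simp
  have lu': "ln u' \<le> 0" using u' by simp
  have l12: "ln (12::real) = ln 6 + ln 2" using ln_mult[of 6 2] by simp
  define X where "X = real n * fF th + jF th"
  define X' where "X' = real n * fF th' + jF th'"
  have "X' \<le> X + ln 12"
    unfolding X_def X'_def fe je l12 using Fn lhu lhu' l6 lu' \<open>ln (u^2) = 2 * ln u\<close> by linarith
  hence "exp X' \<le> exp (X + ln 12)" by simp
  also have "exp (X + ln 12) = 12 * exp X" by (simp add: exp_add)
  finally have eX: "exp X' \<le> 12 * exp X" .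
  have O1: "Omega n m = PP m * real n ^ (2*m - 2) * exp X'"
    unfolding X'_def th'_def using Omega_pos_eq[OF m] .
  have O2: "Omega n (Suc m) = PP (Suc m) * real n ^ (2*m - 2) * (real n)^2 * exp X"
  proof -
    have k: "2 * Suc m - 2 = (2*m - 2) + 2" using m by simp
    have "real n ^ (2 * Suc m - 2) = real n ^ (2*m - 2) * (real n)^2" unfolding k by (rule power_add)
    thus ?thesis unfolding X_def th_def using Omega_pos_eq[of "Suc m" n] by simp
  qed
  have pn: "real n ^ (2*m - 2) > 0" using n0 by simp
  have "Omega n m \<le> (exp 1 * PP (Suc m)) * real n ^ (2*m - 2) * (12 * exp X)"
    unfolding O1 using PP_step[of m] eX pn PP_pos[of m] m
    by (intro mult_mono) auto
  also have "\<dots> = (12 * exp 1) * (PP (Suc m) * real n ^ (2*m - 2) * (real n)^2 * exp X) / (real n)^2"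
    using n0 by (simp add: field_simps)
  finally show ?thesis unfolding O2 .
qed




lemma alg1:
  fixes s n e P F E :: real
  assumes "0 < s" "0 < n" "0 < e" "P \<le> 1/n" "F*n \<le> 3*e^2*E" "0 \<le> F"
  shows "F * P / s \<le> 3 * e^3 * (1/(s*e) * E) / n^2"
proof -
  have "F * P / s \<le> F * (1/n) / s" using assms by (intro divide_right_mono mult_left_mono) auto
  also have "\<dots> = (F*n) / (n^2 * s)" using assms by (simp add: power2_eq_square)
  also have "\<dots> \<le> (3*e^2*E) / (n^2 * s)" using assms by (intro divide_right_mono) auto
  also have "\<dots> = 3 * e^3 * (1/(s*e) * E) / n^2" using assms by (simp add: power2_eq_square power3_eq_cube field_simps)
  finally show ?thesis .
qed

lemma case1: assumes n: "n \<ge> 1"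
  shows "Omega n 0 \<le> 3 * exp 1 ^ 3 * Omega n 1 / (real n)^2"
proof -
  define th where "th = 1 / real n"
  have n0: "real n > 0" using n by simp
  have th0: "th > 0" unfolding th_def using n0 by simp
  obtain u where u: "0 < u" "u < 1" "Bf u = th" using Bf_exists[OF th0] by blast
  have u2: "0 < u^2" "u^2 < 1" using u by (auto simp: abs_square_less_1)
  define X where "X = real n * fF th + jF th"
  have fe: "fF th = FF u" using fF_eq th0 u by auto
  have je: "jF th = - (1/2) * ln (hh u) + (1/2) * ln 2" using jF_eq th0 u by auto
  have hu: "0 < hh u" "hh u \<le> 1" using hh_lb[of u] hh_le1[of u] u u2 by linarith+
  hence "ln (hh u) \<le> 0" by simp
  moreover have "0 \<le> ln (2::real)" by simp
  ultimately have j0: "0 \<le> jF th" unfolding je by linarith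
  have "ln ((1 - u^2)/4) \<le> ln (1/4)" using u2 by (intro ln_mono) auto
  moreover have "ln (1/4::real) = - ln 4" by (simp add: ln_div)
  ultimately have l4: "ln 4 \<le> - ln ((1 - u^2)/4)" by linarith
  have "real n * FF u = real n * (- ln ((1 - u^2)/4)) - 2 * (real n * th) - (real n * th) * ln (u^2)"
    unfolding FF_def u(3) by (simp add: algebra_simps)
  also have "real n * th = 1" unfolding th_def using n0 by simp
  finally have nF: "real n * FF u = real n * (- ln ((1 - u^2)/4)) - 2 - ln (u^2)" by simp
  have "real n * ln 4 \<le> real n * (- ln ((1 - u^2)/4))" using l4 n0 by (intro mult_left_mono) auto
  hence nF2: "real n * ln 4 - 2 - ln (u^2) \<le> real n * FF u" unfolding nF by linarith
  have "u^2/3 \<le> th" using Bf_lb[of u] u by simp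
  hence "u^2 \<le> 3 / real n" unfolding th_def by simp
  hence "ln (u^2) \<le> ln (3 / real n)" using u2 by (intro ln_mono) auto
  also have "ln (3 / real n) = ln 3 - ln (real n)" using n0 by (simp add: ln_div)
  finally have lu: "ln (u^2) \<le> ln 3 - ln (real n)" .
  have Xb: "real n * ln 4 + ln (real n) - ln 3 - 2 \<le> X"
    unfolding X_def fe using nF2 lu j0 by linarith
  have "exp (real n * ln 4 + ln (real n) - ln 3 - 2) = 4^n * real n / 3 / exp 2"
    using n0 by (simp add: exp_add exp_diff exp_of_nat_mult)
  hence "4^n * real n / 3 / exp 2 \<le> exp X" using Xb by (metis exp_le_cancel_iff)
  hence eX: "4^n * real n \<le> 3 * exp 1 ^ 2 * exp X"
    by (simp add: field_simps exp_of_nat_mult[of 2 1, symmetric])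
  have O1: "Omega n 1 = 1 / (sqrt (2*pi) * exp 1) * exp X"
    unfolding Omega_def X_def th_def by simp
  have O0: "Omega n 0 = 4^n * real n powr (-3/2) / sqrt (2*pi)"
    unfolding Omega_def by simp
  have "real n powr (-3/2) \<le> real n powr (-1)" using n by (intro powr_mono) auto
  also have "real n powr (-1) = 1 / real n" using n0 by (simp add: powr_minus_divide)
  finally have P: "real n powr (-3/2) \<le> 1 / real n" .
  show ?thesis unfolding O0 O1
    by (rule alg1) (use n0 P eX in auto)
qed

theorem proposition8:
  "\<exists>C::real. C > 0 \<and> (\<exists>N::nat. \<forall>n g. n \<ge> N \<longrightarrow> n \<ge> 1 \<longrightarrow> g \<ge> 1 \<longrightarrow>
      0 < sR n g \<and> sR n g \<le> C / (real n)^2)"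
proof (intro exI conjI allI impI)
  show "(100::real) > 0" by simp
  fix n g :: nat assume n: "n \<ge> 1" and g: "g \<ge> 1"
  have n0: "real n > 0" using n by simp
  have Og: "Omega n g > 0" and Og1: "Omega n (g-1) > 0" using Omega_pos n by auto
  show "0 < sR n g" unfolding sR_def using Og Og1 by simp
  have e3: "exp 1 \<le> (3::real)" by (rule exp_le)
  have key: "Omega n (g-1) \<le> 100 * Omega n g / (real n)^2"
  proof (cases "g = 1")
    case True
    have "exp 1 ^ 3 \<le> (3::real)^3" using e3 by (intro power_mono) auto
    hence c: "3 * exp 1 ^ 3 \<le> (100::real)" by simp
    have "0 \<le> Omega n 1 / (real n)^2" using Omega_pos[OF n, of 1] by simp
    hence "3 * exp 1 ^ 3 * (Omega n 1 / (real n)^2) \<le> 100 * (Omega n 1 / (real n)^2)"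
      using c by (intro mult_right_mono) auto
    thus ?thesis using case1[OF n] True by simp
  next
    case False
    then obtain m where m: "g = Suc m" "m \<ge> 1" using g by (cases g) auto
    have c: "12 * exp 1 \<le> (100::real)" using e3 by simp
    have "0 \<le> Omega n g / (real n)^2" using Og by simp
    hence "12 * exp 1 * (Omega n g / (real n)^2) \<le> 100 * (Omega n g / (real n)^2)"
      using c by (intro mult_right_mono) auto
    thus ?thesis using case_ge2[OF n m(2)] m(1) by simp
  qed
  show "sR n g \<le> 100 / (real n)^2" unfolding sR_def using key Og n0
    by (simp add: divide_le_eq field_simps)
qed


end
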